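(* Let $X=\{1,\dots,n\}$, $Y$ finite, $Q$ a symmetric irreducible stochastic matrix on $Y$ (notation in context). Let $0\le h\le n$ and let $\underline b$ be a type with $b_0+\cdots+b_m=h$. Then the subspaces $P_{h,\underline b,k}$ of $L(\Theta_h)$, for the integers $k$ with $\ell(\underline b)\le k\le\min\{h,\frac{n+\ell(\underline b)}{2}\}$, are mutually orthogonal with respect to the inner product $\langle F,G\rangle=\sum_{\theta\in\Theta_h}F(\theta)\overline{G(\theta)}$.
   Context: $Q$ acts on $L(Y)$ by $(Qf)(y)=\sum_{y'}q(y,y')f(y')$, with distinct eigenvalues $\lambda_0=1,\dots,\lambda_m$ and eigenspaces $W_0$ (constants), $W_1,\dots,W_m$. For $0\le k\le n$, $\Theta_k$ is the set of functions $\theta$ with $\mathrm{dom}(\theta)$ a $k$-subset of $X$ and values in $Y$ ($\Theta_0$ = empty function); $\varphi\subseteq\theta$ means $\mathrm{dom}\varphi\subseteq\mathrm{dom}\theta$ and $\theta|_{\mathrm{dom}\varphi}=\varphi$. For $1\le k\le n$: $(D_kF)(\varphi)=\sum_{\theta\in\Theta_k:\theta\supseteq\varphi}F(\theta)$ and $(D_k^*F)(\theta)=\sum_{\varphi\in\Theta_{k-1}:\varphi\subseteq\theta}F(\varphi)$; $D_0:=0$. Types $\underline c=(c_0,\dots,c_m)$, $|\underline c|=\sum c_i$, $\ell(\underline c)=c_1+\cdots+c_m$, $\underline c'=(c_0-1,c_1,\dots,c_m)$. A fundamental function of type $\underline c$ on $A$, $|A|=|\underline c|$, is $F=\bigotimes_{j\in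 A}F^j$ ($F(\theta)=\prod_{j\in A}F^j(\theta(j))$ on $Y^A$, $0$ elsewhere) with each $F^j$ in some $W_{i_j}$ and exactly $c_i$ indices with $i_j=i$; $P_{k,\underline c,A}$ is their span, $P_{k,\underline c}=\bigoplus_{|A|=k}P_{k,\underline c,A}$ ($\{0\}$ if an entry is negative). $D_{k,\underline c}=D_k|_{P_{k,\underline c}}$, $D^*_{k,\underline c}=D^*_k|_{P_{k-1,\underline c'}}$. For $|\underline c|=k$: $P_{k,\underline c,k}=\ker D_{k,\underline c}$; for $k<h\le n$, $|\underline c|=h$, $\ell(\underline c)\le k$: $P_{h,\underline c,k}=D^*_{h,\underline c}(P_{h-1,\underline c',k})$. *)

theory Defs
  imports Complex_Main
begin

(* X = {1..n}; Y = the finite type 'y; L(Y) = 'y \<Rightarrow> complex.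
   Partial functions theta are maps nat \<rightharpoonup> 'y with dom theta \<subseteq> {1..n}. *)

definition Qpow :: "('y::finite \<Rightarrow> 'y \<Rightarrow> real) \<Rightarrow> nat \<Rightarrow> 'y \<Rightarrow> 'y \<Rightarrow> real" where
  "Qpow Q r = (compow r (\<lambda>M x y. \<Sum>z\<in>UNIV. M x z * Q z y)) (\<lambda>x y. if x = y then 1 else 0)"

definition symmetric_stochastic_irreducible :: "('y::finite \<Rightarrow> 'y \<Rightarrow> real) \<Rightarrow> bool" where
  "symmetric_stochastic_irreducible Q \<longleftrightarrow>
     (\<forall>x y. Q x y \<ge> 0) \<and> (\<forall>x. (\<Sum>y\<in>UNIV. Q x y) = 1) \<and> (\<forall>x y. Q x y = Q y x) \<and>
     (\<forall>x y. \<exists>r. Qpow Q r x y > 0)"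

definition Qop :: "('y::finite \<Rightarrow> 'y \<Rightarrow> real) \<Rightarrow> ('y \<Rightarrow> complex) \<Rightarrow> 'y \<Rightarrow> complex" where
  "Qop Q f = (\<lambda>y. \<Sum>y'\<in>UNIV. complex_of_real (Q y y') * f y')"

definition eigen_enum :: "('y::finite \<Rightarrow> 'y \<Rightarrow> real) \<Rightarrow> nat \<Rightarrow> (nat \<Rightarrow> complex) \<Rightarrow> bool" where
  "eigen_enum Q m lam \<longleftrightarrow> lam 0 = 1 \<and> inj_on lam {0..m} \<and>
     {\<mu>. \<exists>f. f \<noteq> (\<lambda>_. 0) \<and> Qop Q f = (\<lambda>y. \<mu> * f y)} = lam ` {0..m}"

definition W :: "('y::finite \<Rightarrow> 'y \<Rightarrow> real) \<Rightarrow> (nat \<Rightarrow> complex) \<Rightarrow> nat \<Rightarrow> ('y \<Rightarrow> complex) set" where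
  "W Q lam i = {f. Qop Q f = (\<lambda>y. lam i * f y)}"

definition Theta :: "nat \<Rightarrow> nat \<Rightarrow> (nat \<rightharpoonup> 'y) set" where
  "Theta n k = {\<theta>. dom \<theta> \<subseteq> {1..n} \<and> card (dom \<theta>) = k}"

definition cspan :: "('a \<Rightarrow> complex) set \<Rightarrow> ('a \<Rightarrow> complex) set" where
  "cspan B = {f. \<exists>S c. finite S \<and> S \<subseteq> B \<and> f = (\<lambda>x. \<Sum>g\<in>S. c g * g x)}"

definition D :: "nat \<Rightarrow> nat \<Rightarrow> ((nat \<rightharpoonup> 'y) \<Rightarrow> complex) \<Rightarrow> (nat \<rightharpoonup> 'y) \<Rightarrow> complex" where
  "D n k F = (\<lambda>\<phi>. if k = 0 then 0 else
      if \<phi> \<in> Theta n (k - 1) then (\<Sum>\<theta>\<in>{\<theta>\<in>Theta n k. \<phi> \<subseteq>\<^sub>m \<theta>}. F \<theta>) else 0)"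

definition Dstar :: "nat \<Rightarrow> nat \<Rightarrow> ((nat \<rightharpoonup> 'y) \<Rightarrow> complex) \<Rightarrow> (nat \<rightharpoonup> 'y) \<Rightarrow> complex" where
  "Dstar n k F = (\<lambda>\<theta>. if \<theta> \<in> Theta n k then (\<Sum>\<phi>\<in>{\<phi>\<in>Theta n (k - 1). \<phi> \<subseteq>\<^sub>m \<theta>}. F \<phi>) else 0)"

text \<open>types c = (c 0, ..., c m), entries as integers (negative allowed for c')\<close>
definition tsize :: "nat \<Rightarrow> (nat \<Rightarrow> int) \<Rightarrow> int" where
  "tsize m c = (\<Sum>i\<in>{0..m}. c i)"

definition tlen :: "nat \<Rightarrow> (nat \<Rightarrow> int) \<Rightarrow> int" where
  "tlen m c = (\<Sum>i\<in>{1..m}. c i)"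

definition tprime :: "(nat \<Rightarrow> int) \<Rightarrow> nat \<Rightarrow> int" where
  "tprime c = c(0 := c 0 - 1)"

definition tensor :: "nat set \<Rightarrow> (nat \<Rightarrow> 'y \<Rightarrow> complex) \<Rightarrow> (nat \<rightharpoonup> 'y) \<Rightarrow> complex" where
  "tensor A Fs = (\<lambda>\<theta>. if dom \<theta> = A then (\<Prod>j\<in>A. Fs j (the (\<theta> j))) else 0)"

definition fundamental ::
  "('y::finite \<Rightarrow> 'y \<Rightarrow> real) \<Rightarrow> nat \<Rightarrow> (nat \<Rightarrow> complex) \<Rightarrow> (nat \<Rightarrow> int) \<Rightarrow> nat set
     \<Rightarrow> ((nat \<rightharpoonup> 'y) \<Rightarrow> complex) \<Rightarrow> bool" where
  "fundamental Q m lam c A F \<longleftrightarrow> int (card A) = tsize m c \<and>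
     (\<exists>Fs idx. (\<forall>j\<in>A. idx j \<le> m \<and> Fs j \<in> W Q lam (idx j)) \<and>
               (\<forall>i\<le>m. int (card {j\<in>A. idx j = i}) = c i) \<and>
               F = tensor A Fs)"

text \<open>P_{k,c} = direct sum over k-subsets A of X of P_{k,c,A}\<close>
definition P :: "nat \<Rightarrow> ('y::finite \<Rightarrow> 'y \<Rightarrow> real) \<Rightarrow> nat \<Rightarrow> (nat \<Rightarrow> complex) \<Rightarrow> nat \<Rightarrow> (nat \<Rightarrow> int)
     \<Rightarrow> ((nat \<rightharpoonup> 'y) \<Rightarrow> complex) set" where
  "P n Q m lam k c = cspan {F. \<exists>A. A \<subseteq> {1..n} \<and> card A = k \<and> fundamental Q m lam c A F}"

text \<open>Prec d c = P_{k+d, c, k}\<close>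
fun Prec :: "nat \<Rightarrow> ('y::finite \<Rightarrow> 'y \<Rightarrow> real) \<Rightarrow> nat \<Rightarrow> (nat \<Rightarrow> complex) \<Rightarrow> nat \<Rightarrow> nat \<Rightarrow> (nat \<Rightarrow> int)
     \<Rightarrow> ((nat \<rightharpoonup> 'y) \<Rightarrow> complex) set" where
  "Prec n Q m lam k 0 c = {F \<in> P n Q m lam k c. D n k F = (\<lambda>_. 0)}"
| "Prec n Q m lam k (Suc d) c = Dstar n (k + Suc d) ` Prec n Q m lam k d (tprime c)"

definition Phck :: "nat \<Rightarrow> ('y::finite \<Rightarrow> 'y \<Rightarrow> real) \<Rightarrow> nat \<Rightarrow> (nat \<Rightarrow> complex) \<Rightarrow> nat \<Rightarrow> (nat \<Rightarrow> int) \<Rightarrow> nat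
     \<Rightarrow> ((nat \<rightharpoonup> 'y) \<Rightarrow> complex) set" where
  "Phck n Q m lam h c k = Prec n Q m lam k (h - k) c"

definition inner_Theta :: "nat \<Rightarrow> nat \<Rightarrow> ((nat \<rightharpoonup> 'y) \<Rightarrow> complex) \<Rightarrow> ((nat \<rightharpoonup> 'y) \<Rightarrow> complex) \<Rightarrow> complex" where
  "inner_Theta n h F G = (\<Sum>\<theta>\<in>Theta n h. F \<theta> * cnj (G \<theta>))"

end

theory Submission
  imports Defs
begin


lemma tensor_cong: "(\<And>j. j \<in> A \<Longrightarrow> Fs j = Gs j) \<Longrightarrow> tensor A Fs = tensor A Gs"
  unfolding tensor_def by (auto intro!: ext prod.cong)

lemma D_lin: "finite S \<Longrightarrow> D n k (\<lambda>x. \<Sum>g\<in>S. a g * f g x) = (\<lambda>x. \<Sum>g\<in>S. a g * D n k (f g) x)"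
  unfolding D_def by (rule ext) (simp add: sum_distrib_left, subst sum.swap, simp)

lemma Dstar_lin: "finite S \<Longrightarrow> Dstar n k (\<lambda>x. \<Sum>g\<in>S. a g * f g x) = (\<lambda>x. \<Sum>g\<in>S. a g * Dstar n k (f g) x)"
  unfolding Dstar_def by (rule ext) (simp add: sum_distrib_left, subst sum.swap, simp)

lemma D_smult: "D n k (\<lambda>x. a * f x) = (\<lambda>x. a * D n k f x)"
  unfolding D_def by (auto intro!: ext simp: sum_distrib_left)

lemma Dstar_smult: "Dstar n k (\<lambda>x. a * f x) = (\<lambda>x. a * Dstar n k f x)"
  unfolding Dstar_def by (auto intro!: ext simp: sum_distrib_left)

lemma Dstar_zero: "Dstar n k (\<lambda>x. 0) = (\<lambda>x. 0)"
  unfolding Dstar_def by auto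

lemma D_sum: "D n k (\<lambda>x. \<Sum>g\<in>S. f g x) = (\<lambda>x. \<Sum>g\<in>S. D n k (f g) x)"
  unfolding D_def by (rule ext) (simp, subst sum.swap, simp)

lemma Dstar_sum: "Dstar n k (\<lambda>x. \<Sum>g\<in>S. f g x) = (\<lambda>x. \<Sum>g\<in>S. Dstar n k (f g) x)"
  unfolding Dstar_def by (rule ext) (simp, subst sum.swap, simp)



lemma Qpow_Suc: "Qpow Q (Suc r) x y = (\<Sum>z\<in>UNIV. Qpow Q r x z * Q z y)"
  unfolding Qpow_def by simp

lemma Qpow_0: "Qpow Q 0 x y = (if x = y then 1 else 0)"
  unfolding Qpow_def by simp

lemma harmonic_real_const:
  fixes Q :: "'y::finite \<Rightarrow> 'y \<Rightarrow> real" and g :: "'y \<Rightarrow> real"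
  assumes ssi: "symmetric_stochastic_irreducible Q"
    and hg: "\<And>x. (\<Sum>y\<in>UNIV. Q x y * g y) = g x"
  shows "g x = g y"
proof -
  have nn: "\<And>x y. Q x y \<ge> 0" and rs: "\<And>x. (\<Sum>y\<in>UNIV. Q x y) = 1"
    and sy: "\<And>x y. Q x y = Q y x" and irr: "\<And>x y. \<exists>r. Qpow Q r x y > 0"
    using ssi unfolding symmetric_stochastic_irreducible_def by auto
  have E: "(\<Sum>x\<in>UNIV. \<Sum>y\<in>UNIV. Q x y * (g x - g y)^2) = 0"
  proof -
    have "(\<Sum>x\<in>UNIV. \<Sum>y\<in>UNIV. Q x y * (g x - g y)^2)
        = (\<Sum>x\<in>UNIV. \<Sum>y\<in>UNIV. Q x y * (g x)^2) + (\<Sum>x\<in>UNIV. \<Sum>y\<in>UNIV. Q x y * (g y)^2)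
          - 2 * (\<Sum>x\<in>UNIV. g x * (\<Sum>y\<in>UNIV. Q x y * g y))"
      by (simp add: power2_diff algebra_simps sum.distrib sum_subtractf sum_distrib_left sum_distrib_right)
    also have "(\<Sum>x\<in>UNIV. \<Sum>y\<in>UNIV. Q x y * (g x)^2) = (\<Sum>x\<in>UNIV. (g x)^2)"
      by (simp add: sum_distrib_right[symmetric] rs)
    also have "(\<Sum>x\<in>UNIV. \<Sum>y\<in>UNIV. Q x y * (g y)^2) = (\<Sum>y\<in>UNIV. \<Sum>x\<in>UNIV. Q y x * (g y)^2)"
      by (subst sum.swap) (simp add: sy)
    also have "\<dots> = (\<Sum>x\<in>UNIV. (g x)^2)"
      by (simp add: sum_distrib_right[symmetric] rs)
    also have "(\<Sum>x\<in>UNIV. g x * (\<Sum>y\<in>UNIV. Q x y * g y)) = (\<Sum>x\<in>UNIV. (g x)^2)"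
      by (simp add: hg power2_eq_square)
    finally show ?thesis by simp
  qed
  have each: "Q x y * (g x - g y)^2 = 0" for x y
  proof -
    have "\<forall>x\<in>UNIV. (\<Sum>y\<in>UNIV. Q x y * (g x - g y)^2) = 0"
      using E by (subst (asm) sum_nonneg_eq_0_iff) (auto intro!: sum_nonneg simp: nn)
    then have "(\<Sum>y\<in>UNIV. Q x y * (g x - g y)^2) = 0" by simp
    then show ?thesis by (subst (asm) sum_nonneg_eq_0_iff) (auto simp: nn)
  qed
  have step: "Q x y > 0 \<Longrightarrow> g x = g y" for x y
    using each[of x y] by simp
  have "Qpow Q r x y > 0 \<Longrightarrow> g x = g y" for r y
  proof (induction r arbitrary: y)
    case 0 then show ?case by (simp add: Qpow_0 split: if_splits)
  next
    case (Suc r)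
    then have "(\<Sum>z\<in>UNIV. Qpow Q r x z * Q z y) > 0" by (simp add: Qpow_Suc)
    then obtain z where "Qpow Q r x z * Q z y > 0"
      using sum_nonpos[of UNIV "\<lambda>z. Qpow Q r x z * Q z y"] by (meson not_le)
    moreover have "Q z y \<ge> 0" by (rule nn)
    ultimately have "Q z y > 0" "Qpow Q r x z > 0"
      by (auto simp: zero_less_mult_iff)
    then show ?case using Suc.IH step by metis
  qed
  then show ?thesis using irr by blast
qed

lemma eig1_const:
  fixes Q :: "'y::finite \<Rightarrow> 'y \<Rightarrow> real"
  assumes ssi: "symmetric_stochastic_irreducible Q"
    and hf: "Qop Q f = (\<lambda>y. 1 * f y)"
  shows "f x = f y"
proof -
  have h: "(\<Sum>y'\<in>UNIV. complex_of_real (Q y y') * f y') = f y" for y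
    using fun_cong[OF hf, of y] by (simp add: Qop_def)
  have hr: "(\<Sum>y'\<in>UNIV. Q y y' * Re (f y')) = Re (f y)" for y
    using arg_cong[where f=Re, OF h[of y]] by simp
  have hi: "(\<Sum>y'\<in>UNIV. Q y y' * Im (f y')) = Im (f y)" for y
    using arg_cong[where f=Im, OF h[of y]] by simp
  have "Re (f x) = Re (f y)"
    by (rule harmonic_real_const[OF ssi hr])
  moreover have "Im (f x) = Im (f y)"
    by (rule harmonic_real_const[OF ssi hi])
  ultimately show ?thesis by (simp add: complex_eq_iff)
qed

lemma eig_mean0:
  fixes Q :: "'y::finite \<Rightarrow> 'y \<Rightarrow> real"
  assumes ssi: "symmetric_stochastic_irreducible Q"
    and hf: "Qop Q f = (\<lambda>y. \<mu> * f y)" and mu: "\<mu> \<noteq> 1"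
  shows "(\<Sum>y\<in>UNIV. f y) = 0"
proof -
  have rs: "\<And>x. (\<Sum>y\<in>UNIV. Q x y) = 1" and sy: "\<And>x y. Q x y = Q y x"
    using ssi unfolding symmetric_stochastic_irreducible_def by auto
  have "\<mu> * (\<Sum>y\<in>UNIV. f y) = (\<Sum>y\<in>UNIV. \<Sum>y'\<in>UNIV. complex_of_real (Q y y') * f y')"
    using hf by (simp add: Qop_def sum_distrib_left fun_eq_iff)
  also have "\<dots> = (\<Sum>y'\<in>UNIV. (\<Sum>y\<in>UNIV. complex_of_real (Q y' y)) * f y')"
    by (subst sum.swap) (simp add: sum_distrib_right sy)
  also have "\<dots> = (\<Sum>y\<in>UNIV. f y)"
    by (simp add: of_real_sum[symmetric] rs del: of_real_sum)
  finally have "(\<mu> - 1) * (\<Sum>y\<in>UNIV. f y) = 0" by (simp add: algebra_simps)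
  with mu show ?thesis by simp
qed



lemma finite_Theta: "finite (Theta n k :: (nat \<rightharpoonup> 'y::finite) set)"
proof -
  have "Theta n k \<subseteq> (\<Union>A\<in>Pow {1..n}. {m::nat \<rightharpoonup> 'y. dom m = A \<and> ran m \<subseteq> UNIV})"
    unfolding Theta_def by auto
  moreover have "finite (\<Union>A\<in>Pow {1..n}. {m::nat \<rightharpoonup> 'y. dom m = A \<and> ran m \<subseteq> UNIV})"
    by (intro finite_UN_I finite_set_of_finite_maps) (auto intro: finite_subset)
  ultimately show ?thesis by (rule finite_subset)
qed

lemma map_le_restr: "\<phi> \<subseteq>\<^sub>m \<theta> \<Longrightarrow> \<phi> = \<theta> |` dom \<phi>"
  unfolding map_le_def restrict_map_def by (rule ext) (auto simp: domIff)

lemma DsT: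
  fixes Fs :: "nat \<Rightarrow> 'y::finite \<Rightarrow> complex"
  assumes A: "A \<subseteq> {1..n}"
  shows "Dstar n (Suc (card A)) (tensor A Fs)
     = (\<lambda>x. \<Sum>j\<in>{1..n}-A. tensor (insert j A) (Fs(j:=(\<lambda>_. 1))) x)"
proof (rule ext)
  fix \<theta> :: "nat \<rightharpoonup> 'y"
  have finA: "finite A" using A finite_subset by blast
  show "Dstar n (Suc (card A)) (tensor A Fs) \<theta> = (\<Sum>j\<in>{1..n}-A. tensor (insert j A) (Fs(j:=(\<lambda>_. 1))) \<theta>)"
  proof (cases "A \<subseteq> dom \<theta> \<and> \<theta> \<in> Theta n (Suc (card A))")
    case True
    then have sub: "A \<subseteq> dom \<theta>" and d1: "dom \<theta> \<subseteq> {1..n}" and d2: "card (dom \<theta>) = Suc (card A)"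
      by (auto simp: Theta_def)
    have fin: "finite (dom \<theta>)" using d1 finite_subset by blast
    have "card (dom \<theta> - A) = 1" using card_Diff_subset[OF finA sub] d2 by simp
    then obtain j where j: "dom \<theta> - A = {j}" using card_1_singletonE by blast
    have jd: "j \<in> dom \<theta>" "j \<notin> A" using j by blast+
    have jA: "j \<notin> A" and dj: "dom \<theta> = insert j A" and jn: "j \<in> {1..n}"
      using jd j sub d1 by blast+
    have dr: "dom (\<theta> |` A) = A" using sub by auto
    have lr: "\<theta> |` A \<subseteq>\<^sub>m \<theta>" by (auto simp: map_le_def)
    have mem: "\<theta> |` A \<in> {\<phi>\<in>Theta n (card A). \<phi> \<subseteq>\<^sub>m \<theta>}"
      using dr lr A by (simp add: Theta_def)
    have "Dstar n (Suc (card A)) (tensor A Fs) \<theta> = (\<Sum>\<phi>\<in>{\<phi>\<in>Theta n (card A). \<phi> \<subseteq>\<^sub>m \<theta>}. tensor A Fs \<phi>)"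
      using True by (simp add: Dstar_def)
    also have "\<dots> = (\<Sum>\<phi>\<in>{\<phi>\<in>Theta n (card A). \<phi> \<subseteq>\<^sub>m \<theta>}. if \<phi> = \<theta> |` A then tensor A Fs \<phi> else 0)"
    proof (rule sum.cong)
      fix \<phi> assume "\<phi> \<in> {\<phi>\<in>Theta n (card A). \<phi> \<subseteq>\<^sub>m \<theta>}"
      then have "\<phi> \<subseteq>\<^sub>m \<theta>" by simp
      then have "dom \<phi> = A \<Longrightarrow> \<phi> = \<theta> |` A" using map_le_restr by metis
      then show "tensor A Fs \<phi> = (if \<phi> = \<theta> |` A then tensor A Fs \<phi> else 0)"
        unfolding tensor_def by auto
    qed simp
    also have "\<dots> = tensor A Fs (\<theta> |` A)"
      using mem by (simp add: sum.delta finite_Theta)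
    also have "\<dots> = (\<Prod>l\<in>A. Fs l (the (\<theta> l)))"
    proof -
      have "tensor A Fs (\<theta> |` A) = (\<Prod>l\<in>A. Fs l (the ((\<theta> |` A) l)))"
        using dr by (simp add: tensor_def)
      also have "\<dots> = (\<Prod>l\<in>A. Fs l (the (\<theta> l)))" by (rule prod.cong) simp_all
      finally show ?thesis .
    qed
    finally have L: "Dstar n (Suc (card A)) (tensor A Fs) \<theta> = (\<Prod>l\<in>A. Fs l (the (\<theta> l)))" .
    have "(\<Sum>j'\<in>{1..n}-A. tensor (insert j' A) (Fs(j':=(\<lambda>_. 1))) \<theta>)
        = (\<Sum>j'\<in>{1..n}-A. if j' = j then tensor (insert j' A) (Fs(j':=(\<lambda>_. 1))) \<theta> else 0)"
    proof (rule sum.cong)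
      fix j' assume "j' \<in> {1..n}-A"
      then have j'A: "j' \<notin> A" by simp
      show "tensor (insert j' A) (Fs(j':=(\<lambda>_. 1))) \<theta>
          = (if j' = j then tensor (insert j' A) (Fs(j':=(\<lambda>_. 1))) \<theta> else 0)"
      proof (cases "j' = j")
        case False
        have "dom \<theta> \<noteq> insert j' A"
        proof
          assume "dom \<theta> = insert j' A"
          then have "j' \<in> insert j A" using dj by blast
          then show False using j'A False by simp
        qed
        then show ?thesis using False by (simp add: tensor_def)
      qed simp
    qed simp
    also have "\<dots> = tensor (insert j A) (Fs(j:=(\<lambda>_. 1))) \<theta>"
      using jA jn by (simp add: sum.delta)
    also have "\<dots> = (\<Prod>l\<in>insert j A. (Fs(j:=(\<lambda>_. 1))) l (the (\<theta> l)))"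
      using dj unfolding tensor_def by simp
    also have "\<dots> = (\<Prod>l\<in>A. (Fs(j:=(\<lambda>_. 1))) l (the (\<theta> l)))"
      using finA jA by simp
    also have "\<dots> = (\<Prod>l\<in>A. Fs l (the (\<theta> l)))"
      by (rule prod.cong) (use jA in auto)
    finally show ?thesis using L by simp
  next
    case False
    have L: "Dstar n (Suc (card A)) (tensor A Fs) \<theta> = 0"
    proof (cases "\<theta> \<in> Theta n (Suc (card A))")
      case True
      with False have ns: "\<not> A \<subseteq> dom \<theta>" by simp
      have "Dstar n (Suc (card A)) (tensor A Fs) \<theta> = (\<Sum>\<phi>\<in>{\<phi>\<in>Theta n (card A). \<phi> \<subseteq>\<^sub>m \<theta>}. tensor A Fs \<phi>)"
        using True by (simp add: Dstar_def)
      also have "\<dots> = 0"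
      proof (rule sum.neutral, rule ballI)
        fix \<phi> assume "\<phi> \<in> {\<phi>\<in>Theta n (card A). \<phi> \<subseteq>\<^sub>m \<theta>}"
        then have "dom \<phi> \<subseteq> dom \<theta>" by (simp add: map_le_implies_dom_le)
        then show "tensor A Fs \<phi> = 0" using ns unfolding tensor_def by auto
      qed
      finally show ?thesis .
    qed (simp add: Dstar_def)
    have "tensor (insert j A) (Fs(j:=(\<lambda>_. 1))) \<theta> = 0" if j: "j \<in> {1..n}-A" for j
    proof -
      have "dom \<theta> \<noteq> insert j A"
      proof
        assume d: "dom \<theta> = insert j A"
        then have "\<theta> \<in> Theta n (Suc (card A))" using j A finA by (auto simp: Theta_def)
        then show False using False d by auto
      qed
      then show ?thesis unfolding tensor_def by simp
    qed
    then show ?thesis using L by simp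
  qed
qed

lemma DT:
  fixes Gs :: "nat \<Rightarrow> 'y::finite \<Rightarrow> complex"
  assumes B: "B \<subseteq> {1..n}"
  shows "D n (card B) (tensor B Gs)
     = (\<lambda>x. \<Sum>i\<in>B. (\<Sum>y\<in>UNIV. Gs i y) * tensor (B - {i}) Gs x)"
proof (rule ext)
  fix \<phi> :: "nat \<rightharpoonup> 'y"
  have finB: "finite B" using B finite_subset by blast
  show "D n (card B) (tensor B Gs) \<phi> = (\<Sum>i\<in>B. (\<Sum>y\<in>UNIV. Gs i y) * tensor (B - {i}) Gs \<phi>)"
  proof (cases "\<exists>i\<in>B. dom \<phi> = B - {i}")
    case True
    then obtain i where iB: "i \<in> B" and di: "dom \<phi> = B - {i}" by blast
    have "(\<Sum>i'\<in>B. (\<Sum>y\<in>UNIV. Gs i' y) * tensor (B - {i'}) Gs \<phi>)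
        = (\<Sum>i'\<in>B. if i' = i then (\<Sum>y\<in>UNIV. Gs i' y) * tensor (B - {i'}) Gs \<phi> else 0)"
    proof (rule sum.cong)
      fix i' assume i': "i' \<in> B"
      show "(\<Sum>y\<in>UNIV. Gs i' y) * tensor (B - {i'}) Gs \<phi>
         = (if i' = i then (\<Sum>y\<in>UNIV. Gs i' y) * tensor (B - {i'}) Gs \<phi> else 0)"
      proof (cases "i' = i")
        case False
        have "dom \<phi> \<noteq> B - {i'}"
        proof
          assume h: "dom \<phi> = B - {i'}"
          have "i \<in> B - {i'}" using iB False by simp
          then have "i \<in> dom \<phi>" using h by simp
          then show False using di by simp
        qed
        then show ?thesis using False by (simp add: tensor_def)
      qed simp
    qed simp
    also have "\<dots> = (\<Sum>y\<in>UNIV. Gs i y) * tensor (B - {i}) Gs \<phi>"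
      using iB finB by (simp add: sum.delta)
    finally have R: "(\<Sum>i'\<in>B. (\<Sum>y\<in>UNIV. Gs i' y) * tensor (B - {i'}) Gs \<phi>)
        = (\<Sum>y\<in>UNIV. Gs i y) * tensor (B - {i}) Gs \<phi>" .
    have cB: "card B = Suc (card (B - {i}))" using iB finB
      by (metis card_Suc_Diff1)
    have phT: "\<phi> \<in> Theta n (card B - 1)" using di B cB by (auto simp: Theta_def)
    let ?S = "{\<theta>\<in>Theta n (card B). \<phi> \<subseteq>\<^sub>m \<theta>}"
    let ?R = "range (\<lambda>y. \<phi>(i\<mapsto>y))"
    have iphi: "i \<notin> dom \<phi>" using di by simp
    have RS: "?R \<subseteq> ?S"
    proof
      fix \<theta> assume "\<theta> \<in> ?R"
      then obtain y where t: "\<theta> = \<phi>(i\<mapsto>y)" by blast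
      have "dom \<theta> = B" using t di iB by auto
      moreover have "\<phi> \<subseteq>\<^sub>m \<theta>" using t iphi unfolding map_le_def by auto
      ultimately show "\<theta> \<in> ?S" using B by (auto simp: Theta_def)
    qed
    have z: "\<forall>\<theta>\<in>?S - ?R. tensor B Gs \<theta> = 0"
    proof
      fix \<theta> assume th: "\<theta> \<in> ?S - ?R"
      show "tensor B Gs \<theta> = 0"
      proof (cases "dom \<theta> = B")
        case True
        have le: "\<phi> \<subseteq>\<^sub>m \<theta>" using th by simp
        have "\<theta> = \<phi>(i \<mapsto> the (\<theta> i))"
        proof (rule ext)
          fix l
          show "\<theta> l = (\<phi>(i \<mapsto> the (\<theta> i))) l"
          proof (cases "l = i")
            case True then show ?thesis using iB \<open>dom \<theta> = B\<close> by auto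
          next
            case False
            show ?thesis
            proof (cases "l \<in> dom \<phi>")
              case True then show ?thesis using le False unfolding map_le_def by auto
            next
              case nd: False
              then have "l \<notin> B" using di False by auto
              then show ?thesis using nd False \<open>dom \<theta> = B\<close> by auto
            qed
          qed
        qed
        then have "\<theta> \<in> ?R" by blast
        then show ?thesis using th by simp
      qed (simp add: tensor_def)
    qed
    have "D n (card B) (tensor B Gs) \<phi> = (\<Sum>\<theta>\<in>?S. tensor B Gs \<theta>)"
      using phT cB by (simp add: D_def)
    also have "\<dots> = (\<Sum>\<theta>\<in>?R. tensor B Gs \<theta>)"
      by (rule sum.mono_neutral_right[OF _ RS z]) (simp add: finite_Theta)
    also have "\<dots> = (\<Sum>y\<in>UNIV. tensor B Gs (\<phi>(i\<mapsto>y)))"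
      by (rule sum.reindex_cong[where l="\<lambda>y. \<phi>(i\<mapsto>y)"]) (auto simp: inj_on_def dest: map_upd_eqD1)
    also have "\<dots> = (\<Sum>y\<in>UNIV. Gs i y * tensor (B - {i}) Gs \<phi>)"
    proof (rule sum.cong)
      fix y :: 'y
      have "tensor B Gs (\<phi>(i\<mapsto>y)) = (\<Prod>l\<in>B. Gs l (the ((\<phi>(i\<mapsto>y)) l)))"
        using di iB unfolding tensor_def by auto
      also have "\<dots> = Gs i y * (\<Prod>l\<in>B - {i}. Gs l (the ((\<phi>(i\<mapsto>y)) l)))"
        using iB finB by (simp add: prod.remove)
      also have "(\<Prod>l\<in>B - {i}. Gs l (the ((\<phi>(i\<mapsto>y)) l))) = (\<Prod>l\<in>B - {i}. Gs l (the (\<phi> l)))"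
        by (rule prod.cong) auto
      also have "\<dots> = tensor (B - {i}) Gs \<phi>" using di unfolding tensor_def by simp
      finally show "tensor B Gs (\<phi>(i\<mapsto>y)) = Gs i y * tensor (B - {i}) Gs \<phi>" .
    qed simp
    also have "\<dots> = (\<Sum>y\<in>UNIV. Gs i y) * tensor (B - {i}) Gs \<phi>"
      by (simp add: sum_distrib_right)
    finally show ?thesis using R by simp
  next
    case False
    have R: "(\<Sum>i\<in>B. (\<Sum>y\<in>UNIV. Gs i y) * tensor (B - {i}) Gs \<phi>) = 0"
      using False by (intro sum.neutral) (auto simp: tensor_def)
    have "D n (card B) (tensor B Gs) \<phi> = 0"
    proof (cases "card B \<noteq> 0 \<and> \<phi> \<in> Theta n (card B - 1)")
      case True
      then have cB: "card B \<noteq> 0" and pT: "dom \<phi> \<subseteq> {1..n}" "card (dom \<phi>) = card B - 1"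
        by (auto simp: Theta_def)
      have "D n (card B) (tensor B Gs) \<phi> = (\<Sum>\<theta>\<in>{\<theta>\<in>Theta n (card B). \<phi> \<subseteq>\<^sub>m \<theta>}. tensor B Gs \<theta>)"
        using True by (simp add: D_def)
      also have "\<dots> = 0"
      proof (rule sum.neutral, rule ballI)
        fix \<theta> assume th: "\<theta> \<in> {\<theta>\<in>Theta n (card B). \<phi> \<subseteq>\<^sub>m \<theta>}"
        show "tensor B Gs \<theta> = 0"
        proof (cases "dom \<theta> = B")
          case True
          then have sub: "dom \<phi> \<subseteq> B" using th map_le_implies_dom_le by fastforce
          have "B - dom \<phi> \<noteq> {}"
          proof
            assume "B - dom \<phi> = {}"
            then have "B = dom \<phi>" using sub by auto
            then show False using pT cB by simp
          qed
          then obtain i where i: "i \<in> B" "i \<notin> dom \<phi>" by blast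
          have s2: "dom \<phi> \<subseteq> B - {i}" using sub i by auto
          have "card (B - {i}) = card B - 1" using i finB by simp
          then have "dom \<phi> = B - {i}" using card_subset_eq[OF _ s2] finB pT by simp
          then show ?thesis using False i by blast
        qed (simp add: tensor_def)
      qed
      finally show ?thesis .
    next
      case False
      then show ?thesis by (auto simp: D_def)
    qed
    then show ?thesis using R by simp
  qed
qed



lemma coord:
  fixes Q :: "'y::finite \<Rightarrow> 'y \<Rightarrow> real" and Fs :: "nat \<Rightarrow> 'y \<Rightarrow> complex"
  assumes ssi: "symmetric_stochastic_irreducible Q" and eig: "eigen_enum Q m lam"
    and iA: "i \<in> A" and finA: "finite A" and im: "idx i \<le> m" and FW: "Fs i \<in> W Q lam (idx i)"
  shows "(\<Sum>y\<in>UNIV. Fs i y) * tensor A (Fs(i:=(\<lambda>_. 1))) x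
       = (if idx i = 0 then of_nat (card (UNIV::'y set)) else 0) * tensor A Fs x"
proof (cases "idx i = 0")
  case True
  have l0: "lam 0 = 1" using eig by (simp add: eigen_enum_def)
  have "Qop Q (Fs i) = (\<lambda>y. 1 * Fs i y)" using FW True l0 by (simp add: W_def)
  then have cst: "Fs i y = Fs i undefined" for y by (rule eig1_const[OF ssi])
  have s: "(\<Sum>y\<in>UNIV. Fs i y) = of_nat (card (UNIV::'y set)) * Fs i undefined"
    by (subst cst) simp
  have "tensor A (Fs(i:=(\<lambda>_. 1))) x * Fs i undefined = tensor A Fs x"
  proof (cases "dom x = A")
    case True
    have "(\<Prod>l\<in>A. (Fs(i:=(\<lambda>_. 1))) l (the (x l))) = (\<Prod>l\<in>A-{i}. (Fs(i:=(\<lambda>_. 1))) l (the (x l)))"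
      using iA finA by (simp add: prod.remove)
    also have "\<dots> = (\<Prod>l\<in>A-{i}. Fs l (the (x l)))" by (rule prod.cong) auto
    finally have a: "(\<Prod>l\<in>A. (Fs(i:=(\<lambda>_. 1))) l (the (x l))) = (\<Prod>l\<in>A-{i}. Fs l (the (x l)))" .
    have b: "(\<Prod>l\<in>A. Fs l (the (x l))) = Fs i (the (x i)) * (\<Prod>l\<in>A-{i}. Fs l (the (x l)))"
      using iA finA by (simp add: prod.remove)
    show ?thesis using True a b cst[of "the (x i)"] by (simp add: tensor_def)
  qed (simp add: tensor_def)
  then show ?thesis using True s by (simp add: mult.commute mult.left_commute)
next
  case False
  have l0: "lam 0 = 1" and inj: "inj_on lam {0..m}" using eig by (auto simp: eigen_enum_def)
  have "lam (idx i) \<noteq> lam 0" using inj_onD[OF inj, of "idx i" 0] im False by auto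
  then have ne: "lam (idx i) \<noteq> 1" using l0 by simp
  have "Qop Q (Fs i) = (\<lambda>y. lam (idx i) * Fs i y)" using FW by (simp add: W_def)
  then have "(\<Sum>y\<in>UNIV. Fs i y) = 0" by (rule eig_mean0[OF ssi _ ne])
  then show ?thesis using False by simp
qed

lemma tensor_comm:
  fixes Q :: "'y::finite \<Rightarrow> 'y \<Rightarrow> real" and Fs :: "nat \<Rightarrow> 'y \<Rightarrow> complex"
  assumes ssi: "symmetric_stochastic_irreducible Q" and eig: "eigen_enum Q m lam"
    and A: "A \<subseteq> {1..n}" and hF: "\<forall>j\<in>A. idx j \<le> m \<and> Fs j \<in> W Q lam (idx j)"
  shows "D n (Suc (card A)) (Dstar n (Suc (card A)) (tensor A Fs))
     = (\<lambda>x. Dstar n (card A) (D n (card A) (tensor A Fs)) x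
          + of_nat (card (UNIV::'y set)) * (of_nat (n - card A) - of_nat (card {j\<in>A. idx j = 0})) * tensor A Fs x)"
proof (rule ext)
  fix x
  have finA: "finite A" using A finite_subset by blast
  define U where "U = {1..n::nat}"
  define one where "one = (\<lambda>_::'y. 1::complex)"
  define s where "s = (\<lambda>i. \<Sum>y\<in>UNIV. Fs i y)"
  define T where "T = (\<lambda>i j. tensor (insert j (A - {i})) (Fs(j:=one)) x)"
  define F where "F = tensor A Fs x"
  have finU: "finite U" by (simp add: U_def)
  have AU: "A \<subseteq> U" using A by (simp add: U_def)
  have L1: "D n (Suc (card A)) (Dstar n (Suc (card A)) (tensor A Fs)) x
      = (\<Sum>j\<in>U-A. D n (Suc (card A)) (tensor (insert j A) (Fs(j:=one))) x)"
    unfolding DsT[OF A] D_sum U_def one_def by simp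
  have L2: "D n (Suc (card A)) (tensor (insert j A) (Fs(j:=one))) x
      = of_nat (card (UNIV::'y set)) * F + (\<Sum>i\<in>A. s i * T i j)" if j: "j \<in> U - A" for j
  proof -
    have jA: "j \<notin> A" and jU: "j \<in> U" using j by auto
    have c: "card (insert j A) = Suc (card A)" using jA finA by simp
    have iU: "insert j A \<subseteq> {1..n}" using jU AU by (auto simp: U_def)
    have "D n (Suc (card A)) (tensor (insert j A) (Fs(j:=one))) x
        = (\<Sum>i\<in>insert j A. (\<Sum>y\<in>UNIV. (Fs(j:=one)) i y) * tensor (insert j A - {i}) (Fs(j:=one)) x)"
      using DT[OF iU, of "Fs(j:=one)"] c by simp
    also have "\<dots> = (\<Sum>y\<in>UNIV. (Fs(j:=one)) j y) * tensor (insert j A - {j}) (Fs(j:=one)) x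
        + (\<Sum>i\<in>A. (\<Sum>y\<in>UNIV. (Fs(j:=one)) i y) * tensor (insert j A - {i}) (Fs(j:=one)) x)"
      using jA finA by (simp add: sum.insert)
    also have "(\<Sum>y\<in>UNIV. (Fs(j:=one)) j y) * tensor (insert j A - {j}) (Fs(j:=one)) x = of_nat (card (UNIV::'y set)) * F"
    proof -
      have "insert j A - {j} = A" using jA by auto
      moreover have "tensor A (Fs(j:=one)) = tensor A Fs" by (rule tensor_cong) (use jA in auto)
      ultimately show ?thesis by (simp add: one_def F_def)
    qed
    also have "(\<Sum>i\<in>A. (\<Sum>y\<in>UNIV. (Fs(j:=one)) i y) * tensor (insert j A - {i}) (Fs(j:=one)) x)
        = (\<Sum>i\<in>A. s i * T i j)"
    proof (rule sum.cong)
      fix i assume iA: "i \<in> A"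
      then have "i \<noteq> j" using jA by auto
      moreover have "insert j A - {i} = insert j (A - {i})" using \<open>i \<noteq> j\<close> by auto
      ultimately show "(\<Sum>y\<in>UNIV. (Fs(j:=one)) i y) * tensor (insert j A - {i}) (Fs(j:=one)) x = s i * T i j"
        by (simp add: s_def T_def)
    qed simp
    finally show ?thesis .
  qed
  have L: "D n (Suc (card A)) (Dstar n (Suc (card A)) (tensor A Fs)) x
      = of_nat (card (U - A)) * (of_nat (card (UNIV::'y set)) * F) + (\<Sum>j\<in>U-A. \<Sum>i\<in>A. s i * T i j)"
    using L1 L2 by (simp add: sum.distrib)
  have R1: "Dstar n (card A) (D n (card A) (tensor A Fs)) x
      = (\<Sum>i\<in>A. s i * Dstar n (card A) (tensor (A - {i}) Fs) x)"
    unfolding DT[OF A] Dstar_lin[OF finA] s_def by simp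
  have R2: "Dstar n (card A) (tensor (A - {i}) Fs) x = tensor A (Fs(i:=one)) x + (\<Sum>j\<in>U-A. T i j)"
    if iA: "i \<in> A" for i
  proof -
    have c: "card A = Suc (card (A - {i}))" using iA finA by (metis card_Suc_Diff1)
    have sA: "A - {i} \<subseteq> {1..n}" using A by auto
    have "Dstar n (card A) (tensor (A - {i}) Fs) x
        = (\<Sum>j\<in>{1..n}-(A-{i}). tensor (insert j (A-{i})) (Fs(j:=one)) x)"
      using DsT[OF sA, of Fs] c by (simp add: one_def)
    also have "{1..n}-(A-{i}) = insert i (U - A)" using iA AU by (auto simp: U_def)
    also have "(\<Sum>j\<in>insert i (U - A). tensor (insert j (A-{i})) (Fs(j:=one)) x)
        = tensor (insert i (A-{i})) (Fs(i:=one)) x + (\<Sum>j\<in>U - A. T i j)"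
      using iA finU by (simp add: sum.insert T_def)
    also have "insert i (A-{i}) = A" using iA by auto
    finally show ?thesis .
  qed
  have R3: "s i * tensor A (Fs(i:=one)) x = (if idx i = 0 then of_nat (card (UNIV::'y set)) else 0) * F"
    if iA: "i \<in> A" for i
    unfolding s_def one_def F_def using hF iA by (intro coord[OF ssi eig iA finA]) auto
  have "Dstar n (card A) (D n (card A) (tensor A Fs)) x
      = (\<Sum>i\<in>A. (if idx i = 0 then of_nat (card (UNIV::'y set)) else 0) * F + s i * (\<Sum>j\<in>U-A. T i j))"
    unfolding R1 by (rule sum.cong) (simp_all add: R2 R3[symmetric] distrib_left)
  also have "\<dots> = (\<Sum>i\<in>A. (if idx i = 0 then of_nat (card (UNIV::'y set)) else 0) * F) + (\<Sum>i\<in>A. \<Sum>j\<in>U-A. s i * T i j)"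
    by (simp add: sum.distrib sum_distrib_left)
  also have "(\<Sum>i\<in>A. (if idx i = 0 then of_nat (card (UNIV::'y set)) else 0) * F)
      = of_nat (card (UNIV::'y set)) * of_nat (card {j\<in>A. idx j = 0}) * F"
  proof -
    have "(\<Sum>i\<in>A. (if idx i = 0 then of_nat (card (UNIV::'y set)) else 0) * F)
        = (\<Sum>i\<in>A. if idx i = 0 then of_nat (card (UNIV::'y set)) * F else 0)"
      by (rule sum.cong) auto
    also have "\<dots> = (\<Sum>i\<in>{j\<in>A. idx j = 0}. of_nat (card (UNIV::'y set)) * F)"
      using sum.inter_filter[OF finA, of "\<lambda>_. of_nat (card (UNIV::'y set)) * F" "\<lambda>j. idx j = 0"] by simp
    also have "\<dots> = of_nat (card (UNIV::'y set)) * of_nat (card {j\<in>A. idx j = 0}) * F" by simp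
    finally show ?thesis .
  qed
  also have "(\<Sum>i\<in>A. \<Sum>j\<in>U-A. s i * T i j) = (\<Sum>j\<in>U-A. \<Sum>i\<in>A. s i * T i j)"
    by (rule sum.swap)
  finally have R: "Dstar n (card A) (D n (card A) (tensor A Fs)) x
      = of_nat (card (UNIV::'y set)) * of_nat (card {j\<in>A. idx j = 0}) * F + (\<Sum>j\<in>U-A. \<Sum>i\<in>A. s i * T i j)" .
  have cU: "card (U - A) = n - card A" using AU finA by (simp add: card_Diff_subset U_def)
  have le: "card {j\<in>A. idx j = 0} \<le> card A" using finA by (intro card_mono) auto
  show "D n (Suc (card A)) (Dstar n (Suc (card A)) (tensor A Fs)) x
     = Dstar n (card A) (D n (card A) (tensor A Fs)) x
          + of_nat (card (UNIV::'y set)) * (of_nat (n - card A) - of_nat (card {j\<in>A. idx j = 0})) * tensor A Fs x"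
    unfolding L R cU F_def[symmetric] by (simp add: algebra_simps)
qed



lemma cspan_zero: "(\<lambda>x. 0) \<in> cspan B"
  unfolding cspan_def by (rule CollectI, rule exI[of _ "{}"]) auto

lemma cspan_base: "g \<in> B \<Longrightarrow> g \<in> cspan B"
  unfolding cspan_def by (rule CollectI, rule exI[of _ "{g}"], rule exI[of _ "\<lambda>_. 1"]) auto

lemma cspan_smult: "f \<in> cspan B \<Longrightarrow> (\<lambda>x. a * f x) \<in> cspan B"
  unfolding cspan_def
proof (clarify)
  fix S and c :: "('a \<Rightarrow> complex) \<Rightarrow> complex" assume "finite S" "S \<subseteq> B"
  then show "\<exists>S' c'. finite S' \<and> S' \<subseteq> B \<and> (\<lambda>x. a * (\<Sum>g\<in>S. c g * g x)) = (\<lambda>x. \<Sum>g\<in>S'. c' g * g x)"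
    by (intro exI[of _ S] exI[of _ "\<lambda>g. a * c g"]) (simp add: sum_distrib_left mult.assoc)
qed

lemma cspan_add: "f1 \<in> cspan B \<Longrightarrow> f2 \<in> cspan B \<Longrightarrow> (\<lambda>x. f1 x + f2 x) \<in> cspan B"
  unfolding cspan_def
proof (clarify)
  fix S1 S2 and c1 c2 :: "('a \<Rightarrow> complex) \<Rightarrow> complex" assume f: "finite S1" "S1 \<subseteq> B" "finite S2" "S2 \<subseteq> B"
  let ?S = "S1 \<union> S2"
  let ?c = "\<lambda>g. (if g \<in> S1 then c1 g else 0) + (if g \<in> S2 then c2 g else 0)"
  have e: "(\<Sum>g\<in>?S. (if g \<in> Si then ci g else 0) * g x) = (\<Sum>g\<in>Si. ci g * g x)"
    if "Si \<subseteq> ?S" for Si ci and x :: 'a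
  proof -
    have "(\<Sum>g\<in>?S. (if g \<in> Si then ci g else 0) * g x) = (\<Sum>g\<in>?S. if g \<in> Si then ci g * g x else 0)"
      by (rule sum.cong) auto
    also have "\<dots> = (\<Sum>g\<in>?S \<inter> Si. ci g * g x)"
      using f by (simp add: sum.inter_restrict)
    also have "?S \<inter> Si = Si" using that by auto
    finally show ?thesis .
  qed
  show "\<exists>S c. finite S \<and> S \<subseteq> B \<and>
      (\<lambda>x. (\<Sum>g\<in>S1. c1 g * g x) + (\<Sum>g\<in>S2. c2 g * g x)) = (\<lambda>x. \<Sum>g\<in>S. c g * g x)"
  proof (intro exI[of _ ?S] exI[of _ ?c] conjI ext)
    fix x
    show "(\<Sum>g\<in>S1. c1 g * g x) + (\<Sum>g\<in>S2. c2 g * g x) = (\<Sum>g\<in>?S. ?c g * g x)"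
      using e[of S1 c1 x] e[of S2 c2 x] by (simp add: distrib_right sum.distrib)
  qed (use f in auto)
qed

lemma cspan_sum: "finite S \<Longrightarrow> (\<forall>g\<in>S. f g \<in> cspan B) \<Longrightarrow> (\<lambda>x. \<Sum>g\<in>S. a g * f g x) \<in> cspan B"
proof (induction S rule: finite_induct)
  case empty then show ?case by (simp add: cspan_zero)
next
  case (insert g S)
  have "(\<lambda>x. \<Sum>g'\<in>insert g S. a g' * f g' x) = (\<lambda>x. a g * f g x + (\<Sum>g'\<in>S. a g' * f g' x))"
    using insert by simp
  moreover have "(\<lambda>x. a g * f g x + (\<Sum>g'\<in>S. a g' * f g' x)) \<in> cspan B"
    using insert by (intro cspan_add cspan_smult) auto
  ultimately show ?case by simp
qed

lemma tsize_upd0: "tsize m (c(0 := v)) = tsize m c - c 0 + v"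
proof -
  have s: "{0..m} = insert 0 {1..m}" by auto
  have "(\<Sum>i\<in>{1..m}. (c(0 := v)) i) = (\<Sum>i\<in>{1..m}. c i)" by (rule sum.cong) auto
  then show ?thesis unfolding tsize_def s by simp
qed

lemma Dstar_P:
  fixes Q :: "'y::finite \<Rightarrow> 'y \<Rightarrow> real"
  assumes ssi: "symmetric_stochastic_irreducible Q" and eig: "eigen_enum Q m lam"
    and F: "F \<in> P n Q m lam t c"
  shows "Dstar n (Suc t) F \<in> P n Q m lam (Suc t) (c(0 := c 0 + 1))"
proof -
  let ?G = "{F. \<exists>A. A \<subseteq> {1..n} \<and> card A = t \<and> fundamental Q m lam c A F}"
  let ?G' = "{F. \<exists>A. A \<subseteq> {1..n} \<and> card A = Suc t \<and> fundamental Q m lam (c(0 := c 0 + 1)) A F}"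
  obtain S a where S: "finite S" "S \<subseteq> ?G" and Fe: "F = (\<lambda>x. \<Sum>g\<in>S. a g * g x)"
    using F unfolding P_def cspan_def by blast
  have rs: "\<And>x. (\<Sum>y\<in>UNIV. Q x y) = 1"
    using ssi unfolding symmetric_stochastic_irreducible_def by auto
  have l0: "lam 0 = 1" using eig by (simp add: eigen_enum_def)
  have oneW: "(\<lambda>_::'y. 1::complex) \<in> W Q lam 0"
    unfolding W_def Qop_def using rs l0 by (simp add: of_real_sum[symmetric] del: of_real_sum)
  have each: "Dstar n (Suc t) g \<in> cspan ?G'" if gS: "g \<in> S" for g
  proof -
    obtain A where A: "A \<subseteq> {1..n}" "card A = t" and fg: "fundamental Q m lam c A g"
      using gS S by blast
    obtain Fs idx where hF: "\<forall>j\<in>A. idx j \<le> m \<and> Fs j \<in> W Q lam (idx j)"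
      and cnt: "\<forall>i\<le>m. int (card {j\<in>A. idx j = i}) = c i" and ge: "g = tensor A Fs"
      and ts: "int (card A) = tsize m c"
      using fg unfolding fundamental_def by blast
    have finA: "finite A" using A finite_subset by blast
    have D: "Dstar n (Suc t) g = (\<lambda>x. \<Sum>j\<in>{1..n}-A. 1 * tensor (insert j A) (Fs(j:=(\<lambda>_. 1))) x)"
      using DsT[OF A(1), of Fs] A ge by simp
    have mem: "tensor (insert j A) (Fs(j:=(\<lambda>_. 1))) \<in> ?G'" if j: "j \<in> {1..n}-A" for j
    proof -
      have jA: "j \<notin> A" using j by simp
      have c1: "card (insert j A) = Suc t" using jA finA A by simp
      have fund: "fundamental Q m lam (c(0 := c 0 + 1)) (insert j A) (tensor (insert j A) (Fs(j:=(\<lambda>_. 1))))"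
        unfolding fundamental_def
      proof (intro conjI exI[of _ "Fs(j:=(\<lambda>_. 1))"] exI[of _ "idx(j:=0)"])
        show "int (card (insert j A)) = tsize m (c(0 := c 0 + 1))"
          using c1 ts A by (simp add: tsize_upd0)
        show "\<forall>l\<in>insert j A. (idx(j:=0)) l \<le> m \<and> (Fs(j:=(\<lambda>_. 1))) l \<in> W Q lam ((idx(j:=0)) l)"
          using hF oneW by auto
        show "\<forall>i\<le>m. int (card {l\<in>insert j A. (idx(j:=0)) l = i}) = (c(0 := c 0 + 1)) i"
        proof (intro allI impI)
          fix i assume im: "i \<le> m"
          show "int (card {l\<in>insert j A. (idx(j:=0)) l = i}) = (c(0 := c 0 + 1)) i"
          proof (cases "i = 0")
            case True
            have "{l\<in>insert j A. (idx(j:=0)) l = i} = insert j {l\<in>A. idx l = 0}"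
              using True jA by auto
            moreover have "card (insert j {l\<in>A. idx l = 0}) = Suc (card {l\<in>A. idx l = 0})"
              using jA finA by simp
            ultimately show ?thesis using cnt True by simp
          next
            case False
            have "{l\<in>insert j A. (idx(j:=0)) l = i} = {l\<in>A. idx l = i}"
              using False jA by auto
            then show ?thesis using cnt im False by simp
          qed
        qed
      qed simp
      have sub: "insert j A \<subseteq> {1..n}" using j A by auto
      show ?thesis by (rule CollectI, rule exI[of _ "insert j A"]) (simp only: sub c1 fund simp_thms)
    qed
    show ?thesis unfolding D
    proof (rule cspan_sum)
      show "finite ({1..n}-A)" by simp
      show "\<forall>j\<in>{1..n}-A. tensor (insert j A) (Fs(j:=(\<lambda>_. 1))) \<in> cspan ?G'"
      proof
        fix j assume "j \<in> {1..n}-A"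
        then show "tensor (insert j A) (Fs(j:=(\<lambda>_. 1))) \<in> cspan ?G'" by (rule cspan_base[OF mem])
      qed
    qed
  qed
  have "Dstar n (Suc t) F = (\<lambda>x. \<Sum>g\<in>S. a g * Dstar n (Suc t) g x)"
    unfolding Fe by (rule Dstar_lin[OF S(1)])
  also have "\<dots> \<in> cspan ?G'"
  proof (rule cspan_sum[OF S(1)])
    show "\<forall>g\<in>S. Dstar n (Suc t) g \<in> cspan ?G'" using each by blast
  qed
  finally show ?thesis unfolding P_def .
qed

lemma P_comm:
  fixes Q :: "'y::finite \<Rightarrow> 'y \<Rightarrow> real"
  assumes ssi: "symmetric_stochastic_irreducible Q" and eig: "eigen_enum Q m lam"
    and F: "F \<in> P n Q m lam t c"
  shows "D n (Suc t) (Dstar n (Suc t) F)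
      = (\<lambda>x. Dstar n t (D n t F) x + of_nat (card (UNIV::'y set)) * (of_nat (n - t) - of_int (c 0)) * F x)"
proof -
  let ?G = "{F. \<exists>A. A \<subseteq> {1..n} \<and> card A = t \<and> fundamental Q m lam c A F}"
  let ?\<gamma> = "of_nat (card (UNIV::'y set)) * (of_nat (n - t) - of_int (c 0)) :: complex"
  obtain S a where S: "finite S" "S \<subseteq> ?G" and Fe: "F = (\<lambda>x. \<Sum>g\<in>S. a g * g x)"
    using F unfolding P_def cspan_def by blast
  have each: "D n (Suc t) (Dstar n (Suc t) g) = (\<lambda>x. Dstar n t (D n t g) x + ?\<gamma> * g x)"
    if gS: "g \<in> S" for g
  proof -
    obtain A where A: "A \<subseteq> {1..n}" "card A = t" and fg: "fundamental Q m lam c A g"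
      using gS S by blast
    obtain Fs idx where hF: "\<forall>j\<in>A. idx j \<le> m \<and> Fs j \<in> W Q lam (idx j)"
      and cnt: "\<forall>i\<le>m. int (card {j\<in>A. idx j = i}) = c i" and ge: "g = tensor A Fs"
      using fg unfolding fundamental_def by blast
    have c0: "of_nat (card {j\<in>A. idx j = 0}) = (of_int (c 0) :: complex)"
      using cnt by (metis le0 of_int_of_nat_eq)
    show ?thesis using tensor_comm[OF ssi eig A(1) hF] A ge c0 by simp
  qed
  have "D n (Suc t) (Dstar n (Suc t) F) = (\<lambda>x. \<Sum>g\<in>S. a g * D n (Suc t) (Dstar n (Suc t) g) x)"
    unfolding Fe Dstar_lin[OF S(1)] D_lin[OF S(1)] ..
  also have "\<dots> = (\<lambda>x. \<Sum>g\<in>S. a g * (Dstar n t (D n t g) x + ?\<gamma> * g x))"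
    by (rule ext, rule sum.cong) (simp_all add: each)
  also have "\<dots> = (\<lambda>x. Dstar n t (D n t F) x + ?\<gamma> * F x)"
    unfolding Fe Dstar_lin[OF S(1)] D_lin[OF S(1)]
    by (rule ext) (simp add: distrib_left sum.distrib sum_distrib_left mult.left_commute)
  finally show ?thesis .
qed

fun DS :: "nat \<Rightarrow> nat \<Rightarrow> nat \<Rightarrow> ((nat \<rightharpoonup> 'y) \<Rightarrow> complex) \<Rightarrow> (nat \<rightharpoonup> 'y) \<Rightarrow> complex" where
  "DS n k 0 G = G"
| "DS n k (Suc d) G = Dstar n (k + Suc d) (DS n k d G)"

lemma Prec_DS: "Prec n Q m lam k d c = DS n k d ` Prec n Q m lam k 0 (c(0 := c 0 - int d))"
proof (induction d arbitrary: c)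
  case 0 then show ?case by simp
next
  case (Suc d)
  have e: "(tprime c)(0 := tprime c 0 - int d) = c(0 := c 0 - int (Suc d))"
    by (simp add: tprime_def algebra_simps)
  show ?case using Suc[of "tprime c"] unfolding e by (simp add: image_image)
qed

lemma chain:
  fixes Q :: "'y::finite \<Rightarrow> 'y \<Rightarrow> real"
  assumes ssi: "symmetric_stochastic_irreducible Q" and eig: "eigen_enum Q m lam"
    and G0: "G0 \<in> P n Q m lam k c" and DG0: "D n k G0 = (\<lambda>_. 0)"
  shows "DS n k j G0 \<in> P n Q m lam (k + j) (c(0 := c 0 + int j))
     \<and> (\<exists>\<beta>. D n (k + j) (DS n k j G0) = (\<lambda>x. \<beta> * DS n k (j - 1) G0 x))"
proof (induction j)
  case 0
  have "D n (k + 0) (DS n k 0 G0) = (\<lambda>x. 0 * DS n k (0 - 1) G0 x)" using DG0 by simp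
  moreover have "DS n k 0 G0 \<in> P n Q m lam (k + 0) (c(0 := c 0 + int 0))" using G0 by simp
  ultimately show ?case by blast
next
  case (Suc j)
  let ?X = "DS n k j G0"
  have XP: "?X \<in> P n Q m lam (k + j) (c(0 := c 0 + int j))" using Suc by blast
  have e1: "k + Suc j = Suc (k + j)" by simp
  have e2: "(c(0 := c 0 + int j))(0 := (c(0 := c 0 + int j)) 0 + 1) = c(0 := c 0 + int (Suc j))"
    by (simp add: algebra_simps)
  have P1: "DS n k (Suc j) G0 \<in> P n Q m lam (k + Suc j) (c(0 := c 0 + int (Suc j)))"
    using Dstar_P[OF ssi eig XP] unfolding e1 e2 by simp
  obtain \<gamma> where com: "D n (Suc (k + j)) (Dstar n (Suc (k + j)) ?X) = (\<lambda>x. Dstar n (k + j) (D n (k + j) ?X) x + \<gamma> * ?X x)"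
    using P_comm[OF ssi eig XP] by blast
  have "\<exists>\<beta>. D n (k + Suc j) (DS n k (Suc j) G0) = (\<lambda>x. \<beta> * ?X x)"
  proof (cases j)
    case 0
    then have z: "D n (k + j) ?X = (\<lambda>_. 0)" using DG0 by simp
    have "D n (k + Suc j) (DS n k (Suc j) G0) = (\<lambda>x. \<gamma> * ?X x)"
      using com unfolding z Dstar_zero e1 by simp
    then show ?thesis by blast
  next
    case (Suc j')
    obtain \<beta> where b: "D n (k + j) ?X = (\<lambda>x. \<beta> * DS n k (j - 1) G0 x)" using \<open>_ \<and> _\<close> by blast
    have "Dstar n (k + j) (DS n k (j - 1) G0) = ?X" using Suc by simp
    then have h: "Dstar n (k + j) (D n (k + j) ?X) = (\<lambda>x. \<beta> * ?X x)"
      unfolding b Dstar_smult by simp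
    have "D n (k + Suc j) (DS n k (Suc j) G0) = (\<lambda>x. (\<beta> + \<gamma>) * ?X x)"
      using com unfolding h e1 by (simp add: distrib_right)
    then show ?thesis by blast
  qed
  then show ?case using P1 by (metis diff_Suc_1)
qed

lemma adjoint:
  fixes F G :: "(nat \<rightharpoonup> 'y::finite) \<Rightarrow> complex"
  assumes t1: "t \<ge> 1"
  shows "inner_Theta n t (Dstar n t F) G = inner_Theta n (t - 1) F (D n t G)"
proof -
  have A1: "Dstar n t F \<theta> * cnj (G \<theta>)
      = (\<Sum>\<phi>\<in>Theta n (t - 1). if \<phi> \<subseteq>\<^sub>m \<theta> then F \<phi> * cnj (G \<theta>) else 0)"
    if th: "\<theta> \<in> Theta n t" for \<theta>
  proof -
    have "Dstar n t F \<theta> = (\<Sum>\<phi>\<in>{\<phi>\<in>Theta n (t - 1). \<phi> \<subseteq>\<^sub>m \<theta>}. F \<phi>)"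
      using th unfolding Dstar_def by (simp only: if_True)
    also have "\<dots> = (\<Sum>\<phi>\<in>Theta n (t - 1). if \<phi> \<subseteq>\<^sub>m \<theta> then F \<phi> else 0)"
      by (rule sum.inter_filter[OF finite_Theta])
    finally have "Dstar n t F \<theta> * cnj (G \<theta>)
        = (\<Sum>\<phi>\<in>Theta n (t - 1). (if \<phi> \<subseteq>\<^sub>m \<theta> then F \<phi> else 0) * cnj (G \<theta>))"
      by (simp only: sum_distrib_right)
    also have "\<dots> = (\<Sum>\<phi>\<in>Theta n (t - 1). if \<phi> \<subseteq>\<^sub>m \<theta> then F \<phi> * cnj (G \<theta>) else 0)"
      by (rule sum.cong) auto
    finally show ?thesis .
  qed
  have A2: "F \<phi> * cnj (D n t G \<phi>)
      = (\<Sum>\<theta>\<in>Theta n t. if \<phi> \<subseteq>\<^sub>m \<theta> then F \<phi> * cnj (G \<theta>) else 0)"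
    if ph: "\<phi> \<in> Theta n (t - 1)" for \<phi>
  proof -
    have t0: "t \<noteq> 0" using t1 by simp
    have "D n t G \<phi> = (\<Sum>\<theta>\<in>{\<theta>\<in>Theta n t. \<phi> \<subseteq>\<^sub>m \<theta>}. G \<theta>)"
      using ph t0 unfolding D_def by (simp only: if_True if_False)
    also have "\<dots> = (\<Sum>\<theta>\<in>Theta n t. if \<phi> \<subseteq>\<^sub>m \<theta> then G \<theta> else 0)"
      by (rule sum.inter_filter[OF finite_Theta])
    finally have "F \<phi> * cnj (D n t G \<phi>)
        = (\<Sum>\<theta>\<in>Theta n t. F \<phi> * cnj (if \<phi> \<subseteq>\<^sub>m \<theta> then G \<theta> else 0))"
      by (simp only: cnj_sum sum_distrib_left)
    also have "\<dots> = (\<Sum>\<theta>\<in>Theta n t. if \<phi> \<subseteq>\<^sub>m \<theta> then F \<phi> * cnj (G \<theta>) else 0)"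
      by (rule sum.cong) auto
    finally show ?thesis .
  qed
  have "inner_Theta n t (Dstar n t F) G
      = (\<Sum>\<theta>\<in>Theta n t. \<Sum>\<phi>\<in>Theta n (t - 1). if \<phi> \<subseteq>\<^sub>m \<theta> then F \<phi> * cnj (G \<theta>) else 0)"
    unfolding inner_Theta_def by (rule sum.cong[OF refl]) (rule A1)
  also have "\<dots> = (\<Sum>\<phi>\<in>Theta n (t - 1). \<Sum>\<theta>\<in>Theta n t. if \<phi> \<subseteq>\<^sub>m \<theta> then F \<phi> * cnj (G \<theta>) else 0)"
    by (rule sum.swap)
  also have "\<dots> = inner_Theta n (t - 1) F (D n t G)"
    unfolding inner_Theta_def by (rule sum.cong[OF refl]) (rule A2[symmetric])
  finally show ?thesis .
qed

lemma inner_smult: "inner_Theta n t F (\<lambda>x. \<beta> * G x) = cnj \<beta> * inner_Theta n t F G"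
  unfolding inner_Theta_def by (simp add: sum_distrib_left mult_ac)

lemma inner_zero: "inner_Theta n t F (\<lambda>_. 0) = 0"
  unfolding inner_Theta_def by simp

lemma inner_swap: "inner_Theta n t G F = cnj (inner_Theta n t F G)"
  unfolding inner_Theta_def by (simp add: cnj_sum mult.commute)

lemma orth_core:
  fixes Q :: "'y::finite \<Rightarrow> 'y \<Rightarrow> real"
  assumes ssi: "symmetric_stochastic_irreducible Q" and eig: "eigen_enum Q m lam"
    and k12: "k1 < k2" "k2 \<le> h"
    and F: "F \<in> Phck n Q m lam h b k1" and G: "G \<in> Phck n Q m lam h b k2"
  shows "inner_Theta n h F G = 0"
proof -
  obtain F0 where F0: "F = DS n k1 (h - k1) F0"
    using F unfolding Phck_def Prec_DS[of n Q m lam k1 "h - k1"] by blast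
  obtain G0 where G0: "G0 \<in> Prec n Q m lam k2 0 (b(0 := b 0 - int (h - k2)))" and Ge: "G = DS n k2 (h - k2) G0"
    using G unfolding Phck_def Prec_DS[of n Q m lam k2 "h - k2"] by blast
  let ?c = "b(0 := b 0 - int (h - k2))"
  have G0P: "G0 \<in> P n Q m lam k2 ?c" and DG0: "D n k2 G0 = (\<lambda>_. 0)" using G0 by auto
  have key: "inner_Theta n (k2 + j) (DS n k1 (k2 - k1 + j) F0) (DS n k2 j G0) = 0" for j
  proof (induction j)
    case 0
    obtain e where e: "k2 - k1 = Suc e" using k12 by (metis Suc_diff_Suc)
    have "Suc (k1 + e) = k2" using e k12 by arith
    then have "DS n k1 (k2 - k1 + 0) F0 = Dstar n k2 (DS n k1 e F0)" using e by simp
    then have "inner_Theta n (k2 + 0) (DS n k1 (k2 - k1 + 0) F0) (DS n k2 0 G0)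
        = inner_Theta n k2 (Dstar n k2 (DS n k1 e F0)) G0" by simp
    also have "\<dots> = inner_Theta n (k2 - 1) (DS n k1 e F0) (D n k2 G0)"
      using k12 by (intro adjoint) simp
    also have "\<dots> = 0" unfolding DG0 by (rule inner_zero)
    finally show ?case .
  next
    case (Suc j)
    have e: "DS n k1 (k2 - k1 + Suc j) F0 = Dstar n (k2 + Suc j) (DS n k1 (k2 - k1 + j) F0)"
      using k12 by simp
    obtain \<beta> where b: "D n (k2 + Suc j) (DS n k2 (Suc j) G0) = (\<lambda>x. \<beta> * DS n k2 j G0 x)"
      using chain[OF ssi eig G0P DG0, of "Suc j"] by auto
    have "inner_Theta n (k2 + Suc j) (DS n k1 (k2 - k1 + Suc j) F0) (DS n k2 (Suc j) G0)
        = inner_Theta n (k2 + j) (DS n k1 (k2 - k1 + j) F0) (D n (k2 + Suc j) (DS n k2 (Suc j) G0))"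
      unfolding e by (subst adjoint) simp_all
    also have "\<dots> = 0" unfolding b inner_smult Suc.IH by simp
    finally show ?case .
  qed
  have "k2 + (h - k2) = h" "k2 - k1 + (h - k2) = h - k1" using k12 by auto
  then show ?thesis using key[of "h - k2"] F0 Ge by simp
qed


theorem lemma7p10:
  fixes n h m :: nat and Q :: "'y::finite \<Rightarrow> 'y \<Rightarrow> real" and lam :: "nat \<Rightarrow> complex"
    and b :: "nat \<Rightarrow> int"
  assumes "symmetric_stochastic_irreducible Q"
    and "eigen_enum Q m lam"
    and "h \<le> n"
    and "\<forall>i\<le>m. b i \<ge> 0"
    and "tsize m b = int h"
  shows "\<forall>k1 k2 F G. int k1 \<ge> tlen m b \<and> k1 \<le> h \<and> real k1 \<le> (real n + of_int (tlen m b)) / 2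
          \<and> int k2 \<ge> tlen m b \<and> k2 \<le> h \<and> real k2 \<le> (real n + of_int (tlen m b)) / 2
          \<and> k1 \<noteq> k2 \<and> F \<in> Phck n Q m lam h b k1 \<and> G \<in> Phck n Q m lam h b k2
          \<longrightarrow> inner_Theta n h F G = 0"
proof (intro allI impI)
  fix k1 k2 F G
  assume H: "int k1 \<ge> tlen m b \<and> k1 \<le> h \<and> real k1 \<le> (real n + of_int (tlen m b)) / 2
          \<and> int k2 \<ge> tlen m b \<and> k2 \<le> h \<and> real k2 \<le> (real n + of_int (tlen m b)) / 2
          \<and> k1 \<noteq> k2 \<and> F \<in> Phck n Q m lam h b k1 \<and> G \<in> Phck n Q m lam h b k2"
  show "inner_Theta n h F G = 0"
  proof (cases "k1 < k2")
    case True
    then show ?thesis using orth_core[OF assms(1,2) True] H by blast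
  next
    case False
    then have lt: "k2 < k1" using H by auto
    have "inner_Theta n h G F = 0" using orth_core[OF assms(1,2) lt] H by blast
    then show ?thesis using inner_swap[of n h G F] by simp
  qed
qed

end
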